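(* (1) For every integer $n\ge 0$, the polynomials $B_n(t)$ and $B_{n+1}(t)$ are coprime in $\mathbb{Z}[t]$, i.e. $\gcd(B_n(t),B_{n+1}(t))=1$. (2) If $a,b$ are odd positive integers with $a+b=2^{n}$ for some $n$, then $\gcd(B_a(t),B_b(t))=1$.
   Context: The Stern polynomials $B_n(t)\in\mathbb{Z}[t]$, $n\ge 0$, are defined by $B_0(t)=0$, $B_1(t)=1$, $B_{2n}(t)=tB_n(t)$ and $B_{2n+1}(t)=B_n(t)+B_{n+1}(t)$ for $n\ge 1$. *)

theory Defs
  imports "HOL-Computational_Algebra.Computational_Algebra"
begin

function stern_poly :: "nat \<Rightarrow> int poly" where
  "stern_poly n =
     (if n = 0 then 0
      else if n = 1 then 1
      else if even n then [:0, 1:] * stern_poly (n div 2)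
      else stern_poly (n div 2) + stern_poly (n div 2 + 1))"
  by auto
termination by (relation "measure id") (auto elim!: oddE)

lemma stern_poly_0: "stern_poly 0 = 0" by simp
lemma stern_poly_1: "stern_poly 1 = 1" by simp
lemma stern_poly_even: "n \<ge> 1 \<Longrightarrow> stern_poly (2*n) = [:0,1:] * stern_poly n" by simp
lemma stern_poly_odd: "n \<ge> 1 \<Longrightarrow> stern_poly (2*n+1) = stern_poly n + stern_poly (n+1)" by simp

declare stern_poly.simps[simp del]

end

theory Submission
  imports Defs
begin

lemma sp_even: "stern_poly (2*n) = [:0,1:] * stern_poly n"
  by (cases "n = 0") (simp_all add: stern_poly_even stern_poly_0)

lemma sp1[simp]: "stern_poly (Suc 0) = 1"
  using stern_poly_1 by simp

lemma sp_odd: "stern_poly (2*n+1) = stern_poly n + stern_poly (n+1)"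
proof (cases "n = 0")
  case True then show ?thesis by (simp add: stern_poly_0)
next
  case False then show ?thesis using stern_poly_odd[of n] by simp
qed

lemma sp_odd0: "poly (stern_poly (2*n+1)) 0 = 1"
proof (induction n rule: less_induct)
  case (less n)
  show ?case
  proof (cases "even n")
    case True
    then obtain m where m: "n = 2*m" by blast
    have e: "poly (stern_poly (2*m+1)) 0 = 1"
    proof (cases "m = 0")
      case True then show ?thesis by simp
    next
      case False then show ?thesis using less[of m] m by simp
    qed
    have "stern_poly (2*n+1) = [:0,1:] * stern_poly m + stern_poly (2*m+1)"
      using m sp_odd[of n] sp_even[of m] by simp
    then show ?thesis using e by simp
  next
    case False
    then obtain m where m: "n = 2*m+1" using oddE by blast
    have "stern_poly (2*n+1) = stern_poly (2*m+1) + [:0,1:] * stern_poly (m+1)"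
      using m sp_odd[of n] sp_even[of "m+1"] by (simp add: mult_2)
    then show ?thesis using less[of m] m by simp
  qed
qed

lemma t_prime: "prime_elem ([:0,1:] :: int poly)"
  by (rule prime_elem_linear_poly) auto

lemma coprime_t: "coprime [:0,1:] (stern_poly (2*n+1))"
proof -
  have "\<not> [:0,1:] dvd stern_poly (2*n+1)"
    using dvd_iff_poly_eq_0[of 0 "stern_poly (2*n+1)"] sp_odd0[of n] by simp
  then show ?thesis using t_prime prime_elem_imp_coprime by blast
qed

lemma part1: "coprime (stern_poly n) (stern_poly (n + 1))"
proof (induction n rule: less_induct)
  case (less n)
  show ?case
  proof (cases "even n")
    case True
    then obtain m where m: "n = 2*m" by blast
    have "coprime (stern_poly m) (stern_poly m + stern_poly (m+1))"
    proof (cases "m = 0")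
      case True then show ?thesis by (simp add: stern_poly_0)
    next
      case False
      then have "coprime (stern_poly m) (stern_poly (m+1))" using less[of m] m by simp
      then show ?thesis by (simp add: coprime_iff_gcd_eq_1)
    qed
    moreover have "coprime [:0,1:] (stern_poly m + stern_poly (m+1))"
      using coprime_t[of m] sp_odd[of m] by metis
    ultimately have "coprime ([:0,1:] * stern_poly m) (stern_poly m + stern_poly (m+1))"
      by (simp only: coprime_mult_left_iff)
    moreover have "stern_poly n = [:0,1:] * stern_poly m" using m sp_even[of m] by simp
    moreover have "stern_poly (n+1) = stern_poly m + stern_poly (m+1)" using m sp_odd[of m] by simp
    ultimately show ?thesis by simp
  next
    case False
    then obtain m where m: "n = 2*m+1" using oddE by blast
    have "n + 1 = 2*(m+1)" using m by simp
    have "coprime (stern_poly m + stern_poly (m+1)) (stern_poly (m+1))"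
      using less[of m] m by (simp add: coprime_iff_gcd_eq_1)
    moreover have "coprime (stern_poly m + stern_poly (m+1)) [:0,1:]"
      using coprime_t[of m] sp_odd[of m] by (metis coprime_commute)
    ultimately have "coprime (stern_poly m + stern_poly (m+1)) ([:0,1:] * stern_poly (m+1))"
      by (simp only: coprime_mult_right_iff)
    moreover have "stern_poly (n+1) = [:0,1:] * stern_poly (m+1)"
      using \<open>n + 1 = 2*(m+1)\<close> sp_even[of "m+1"] by simp
    moreover have "stern_poly n = stern_poly m + stern_poly (m+1)" using m sp_odd[of m] by simp
    ultimately show ?thesis by simp
  qed
qed

lemma ident: "k + l = 2^m - 1 \<Longrightarrow>
  stern_poly (k+1) * stern_poly (l+1) - stern_poly k * stern_poly l = [:0,1:]^m"
proof (induction m arbitrary: k l)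
  case 0
  then show ?case by (simp add: stern_poly_0)
next
  case (Suc m)
  have odd_pow: "odd (k + l)" if "k + l = 2^Suc m - 1" for k l :: nat
  proof -
    have "(2::nat)^Suc m \<ge> 1" by simp
    then show ?thesis using that by (simp add: even_diff_nat)
  qed
  have key: "stern_poly (k+1) * stern_poly (l+1) - stern_poly k * stern_poly l = [:0,1:]^Suc m"
    if "k + l = 2^Suc m - 1" "even k" for k l
  proof -
    obtain p where p: "k = 2*p" using \<open>even k\<close> by blast
    have "odd l" using odd_pow[OF that(1)] \<open>even k\<close> by (metis even_add)
    then obtain q where q: "l = 2*q+1" using oddE by blast
    have "p + q = 2^m - 1" using that(1) p q by simp
    hence IH: "stern_poly (p+1) * stern_poly (q+1) - stern_poly p * stern_poly q = [:0,1:]^m"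
      using Suc.IH by blast
    have "l + 1 = 2*(q+1)" using q by simp
    hence "stern_poly (k+1) * stern_poly (l+1) - stern_poly k * stern_poly l
       = [:0,1:] * (stern_poly (p+1) * stern_poly (q+1) - stern_poly p * stern_poly q)"
    proof -
      have e1: "stern_poly (k+1) = stern_poly p + stern_poly (p+1)" using p sp_odd[of p] by simp
      have e2: "stern_poly (l+1) = [:0,1:] * stern_poly (q+1)" using \<open>l+1 = 2*(q+1)\<close> sp_even[of "q+1"] by simp
      have e3: "stern_poly k = [:0,1:] * stern_poly p" using p sp_even[of p] by simp
      have e4: "stern_poly l = stern_poly q + stern_poly (q+1)" using q sp_odd[of q] by simp
      show ?thesis unfolding e1 e2 e3 e4 by (simp add: algebra_simps)
    qed
    then show ?thesis using IH by simp
  qed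
  show ?case
  proof (cases "even k")
    case True then show ?thesis using key Suc.prems by blast
  next
    case False
    have "even l" using False odd_pow[OF Suc.prems] by (metis even_add)
    then show ?thesis using key[of l k] Suc.prems by (simp add: add.commute mult.commute)
  qed
qed

lemma part2:
  assumes "odd a" "odd b" "a + b = 2^n"
  shows "gcd (stern_poly a) (stern_poly b) = 1"
proof -
  obtain k where k: "a = 2*k+1" using assms(1) oddE by blast
  obtain l where l: "b = 2*l+1" using assms(2) oddE by blast
  have "n \<noteq> 0" using assms k l by (cases n) auto
  then obtain m where nm: "n = Suc m" by (cases n) auto
  have "k + l = 2^m - 1" using assms(3) k l nm by simp
  from ident[OF this] have I:
    "stern_poly (k+1) * stern_poly (l+1) - stern_poly k * stern_poly l = [:0,1:]^m" .
  define g where "g = gcd (stern_poly a) (stern_poly b)"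
  have ga: "g dvd stern_poly k + stern_poly (k+1)" using k g_def sp_odd[of k] by (metis gcd_dvd1)
  have gb: "g dvd stern_poly l + stern_poly (l+1)" using l g_def sp_odd[of l] by (metis gcd_dvd2)
  have "(stern_poly k + stern_poly (k+1)) * stern_poly (l+1) - stern_poly k * (stern_poly l + stern_poly (l+1))
      = [:0,1:]^m" using I by (simp add: algebra_simps)
  moreover have "g dvd (stern_poly k + stern_poly (k+1)) * stern_poly (l+1) - stern_poly k * (stern_poly l + stern_poly (l+1))"
    using ga gb by (simp add: dvd_diff)
  ultimately have gt: "g dvd [:0,1:]^m" by simp
  have "coprime ([:0,1:]^m) (stern_poly a)" using coprime_t[of k] k by simp
  hence "is_unit g" using gt g_def
    by (metis coprime_common_divisor gcd_dvd1)
  then show ?thesis using g_def by simp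
qed

theorem corollary2p6:
  shows "(\<forall>n::nat. gcd (stern_poly n) (stern_poly (n + 1)) = 1) \<and>
         (\<forall>a b n::nat. odd a \<longrightarrow> odd b \<longrightarrow> 0 < a \<longrightarrow> 0 < b \<longrightarrow> a + b = 2 ^ n \<longrightarrow>
            gcd (stern_poly a) (stern_poly b) = 1)"
  using part1 part2 by (auto simp: coprime_iff_gcd_eq_1)

end
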